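(* Let $A=\begin{pmatrix}b&0&0\\1&0&k\\0&1&t\end{pmatrix}$, $G_1=\begin{pmatrix}b(2b-t)\\2b-t\\2\end{pmatrix}$ and $G_{n+1}=A^nG_1$ for $n\ge1$, over the graded ring $\mathbb{C}[b,t,k]$ with $\deg b=\deg t=1$, $\deg k=2$. Then the Hilbert series of the graded ring $\mathbb{C}[b,t,k]/(G_{n+1})$ (the ideal generated by the three entries of $G_{n+1}$) is $$\frac{(1-u^n)(1-u^{n+1})(1-u^{n+2})}{(u-1)^2(1-u^2)}.$$ *)

theory Defs
  imports "HOL-Analysis.Analysis" "HOL-Library.Poly_Mapping"
    "HOL-Computational_Algebra.Formal_Power_Series"
begin

text \<open>Polynomials in C[b,t,k]: finitely supported maps from exponent vectors
  (nat \<Rightarrow>0 nat) to complex coefficients. Variable 0 is b, 1 is t, 2 is k.\<close>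
type_synonym mpoly = "(nat \<Rightarrow>\<^sub>0 nat) \<Rightarrow>\<^sub>0 complex"

definition var :: "nat \<Rightarrow> mpoly" where
  "var i = Poly_Mapping.single (Poly_Mapping.single i 1) 1"

definition vb :: mpoly where "vb = var 0"
definition vt :: mpoly where "vt = var 1"
definition vk :: mpoly where "vk = var 2"

definition cscale :: "complex \<Rightarrow> mpoly \<Rightarrow> mpoly" where
  "cscale c p = Poly_Mapping.single 0 c * p"

definition wdeg :: "(nat \<Rightarrow>\<^sub>0 nat) \<Rightarrow> nat" where
  "wdeg m = poly_mapping.lookup m 0 + poly_mapping.lookup m 1 + 2 * poly_mapping.lookup m 2"

definition polys3 :: "mpoly set" where
  "polys3 = {p. \<forall>m \<in> Poly_Mapping.keys p. Poly_Mapping.keys m \<subseteq> {0,1,2}}"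

definition homog :: "nat \<Rightarrow> mpoly set" where
  "homog d = {p \<in> polys3. \<forall>m \<in> Poly_Mapping.keys p. wdeg m = d}"

definition gen_ideal :: "mpoly ^ 3 \<Rightarrow> mpoly set" where
  "gen_ideal g = {(\<Sum>i\<in>UNIV. a $ i * g $ i) | a. \<forall>i. a $ i \<in> polys3}"

text \<open>Hilbert function of C[b,t,k]/I: dim_C (R_d / I_d) = dim R_d - dim (I \<inter> R_d).\<close>
definition hilbert_fun :: "mpoly set \<Rightarrow> nat \<Rightarrow> nat" where
  "hilbert_fun I d = vector_space.dim cscale (homog d) - vector_space.dim cscale (I \<inter> homog d)"

definition hilbert_series :: "mpoly set \<Rightarrow> complex fps" where
  "hilbert_series I = Abs_fps (\<lambda>d. of_nat (hilbert_fun I d))"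

primrec matpow :: "'a::semiring_1 ^ 'n ^ 'n \<Rightarrow> nat \<Rightarrow> 'a ^ 'n ^ 'n" where
  "matpow M 0 = mat 1"
| "matpow M (Suc n) = M ** matpow M n"

definition matA :: "mpoly ^ 3 ^ 3" where
  "matA = vector [vector [vb, 0, 0], vector [1, 0, vk], vector [0, 1, vt]]"

definition G1 :: "mpoly ^ 3" where
  "G1 = vector [vb * (2 * vb - vt), 2 * vb - vt, 2]"

definition G :: "nat \<Rightarrow> mpoly ^ 3" where
  "G m = matpow matA (m - 1) *v G1"

end

theory Submission
  imports Defs
begin


lemma cscale_mult_single: "Poly_Mapping.single 0 a * Poly_Mapping.single 0 b = (Poly_Mapping.single 0 (a*b) :: mpoly)"
  by (simp add: mult_single)

interpretation cs: vector_space cscale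
proof unfold_locales
  fix a b :: complex and x y :: mpoly
  show "cscale a (x + y) = cscale a x + cscale a y" by (simp add: cscale_def algebra_simps)
  show "cscale (a + b) x = cscale a x + cscale b x" by (simp add: cscale_def algebra_simps single_add)
  show "cscale a (cscale b x) = cscale (a * b) x"
    by (simp add: cscale_def mult.assoc[symmetric] cscale_mult_single)
  show "cscale 1 x = x" by (simp add: cscale_def)
qed

lemma cscale_mult_left[simp]: "cscale c p * q = cscale c (p * q)"
  by (simp add: cscale_def mult.assoc)
lemma cscale_mult_right[simp]: "p * cscale c q = cscale c (p * q)"
  by (simp add: cscale_def mult.left_commute)

definition mexp :: "nat \<Rightarrow> nat \<Rightarrow> nat \<Rightarrow> (nat \<Rightarrow>\<^sub>0 nat)" where
  "mexp i a c = Poly_Mapping.single 0 i + Poly_Mapping.single 1 a + Poly_Mapping.single 2 c"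

definition Mon :: "nat \<Rightarrow> nat \<Rightarrow> nat \<Rightarrow> mpoly" where
  "Mon i a c = Poly_Mapping.single (mexp i a c) 1"

lemma mexp_add: "mexp i a c + mexp i' a' c' = mexp (i+i') (a+a') (c+c')"
  by (simp add: mexp_def single_add algebra_simps)

lemma Mon_mult: "Mon i a c * Mon i' a' c' = Mon (i+i') (a+a') (c+c')"
  by (simp add: Mon_def mult_single mexp_add)

lemma lookup_mexp[simp]: "Poly_Mapping.lookup (mexp i a c) (0::nat) = i" "Poly_Mapping.lookup (mexp i a c) (Suc 0) = a" "Poly_Mapping.lookup (mexp i a c) (2::nat) = c"
  by (simp_all add: mexp_def Poly_Mapping.lookup_add lookup_single when_def)

lemma mexp_inj: "mexp i a c = mexp i' a' c' \<longleftrightarrow> i = i' \<and> a = a' \<and> c = c'"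
  by (metis lookup_mexp(1,2,3))

lemma Mon_inj: "Mon i a c = Mon i' a' c' \<longleftrightarrow> i = i' \<and> a = a' \<and> c = c'"
  unfolding Mon_def by (metis lookup_single_eq lookup_single_not_eq one_neq_zero mexp_inj)

lemma wdeg_mexp[simp]: "wdeg (mexp i a c) = i + a + 2*c"
  by (simp add: wdeg_def lookup_mexp)

lemma keys_mexp: "Poly_Mapping.keys (mexp i a c) \<subseteq> {0,1,2}"
  unfolding mexp_def
  using keys_add[of "Poly_Mapping.single 0 i + Poly_Mapping.single 1 a" "Poly_Mapping.single (2::nat) c"]
     keys_add[of "Poly_Mapping.single (0::nat) i" "Poly_Mapping.single 1 a"] by (auto split: if_splits)

lemma mexp_of: assumes "Poly_Mapping.keys m \<subseteq> {0,1,2}"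
  shows "m = mexp (Poly_Mapping.lookup m 0) (Poly_Mapping.lookup m 1) (Poly_Mapping.lookup m 2)"
proof (rule poly_mapping_eqI)
  fix x show "Poly_Mapping.lookup m x = Poly_Mapping.lookup (mexp (Poly_Mapping.lookup m 0) (Poly_Mapping.lookup m 1) (Poly_Mapping.lookup m 2)) x"
  proof (cases "x \<in> {0,1,2}")
    case True then show ?thesis by (auto simp: lookup_mexp)
  next
    case False
    then have "Poly_Mapping.lookup m x = 0" using assms by (meson in_keys_iff subsetD)
    moreover have "Poly_Mapping.lookup (mexp (Poly_Mapping.lookup m 0) (Poly_Mapping.lookup m 1) (Poly_Mapping.lookup m 2)) x = 0"
      using False keys_mexp by (meson in_keys_iff subsetD)
    ultimately show ?thesis by simp
  qed
qed

lemma Mon_000[simp]: "Mon 0 0 0 = 1"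
  by (simp add: Mon_def mexp_def)

lemma vb_Mon: "vb = Mon 1 0 0" and vt_Mon: "vt = Mon 0 1 0" and vk_Mon: "vk = Mon 0 0 1"
  by (simp_all add: vb_def vt_def vk_def var_def Mon_def mexp_def)

lemma var_pow_Mon: "vb ^ e = Mon e 0 0" "vt ^ e = Mon 0 e 0" "vk ^ e = Mon 0 0 e"
  by (induction e) (simp_all add: vb_Mon vt_Mon vk_Mon Mon_mult)

lemma poly_expand: "p = (\<Sum>m\<in>Poly_Mapping.keys p. Poly_Mapping.single m (Poly_Mapping.lookup p m))"
proof (rule poly_mapping_eqI)
  fix x
  have "Poly_Mapping.lookup (\<Sum>m\<in>Poly_Mapping.keys p. Poly_Mapping.single m (Poly_Mapping.lookup p m)) x
     = (\<Sum>m\<in>Poly_Mapping.keys p. (Poly_Mapping.lookup p m when m = x))"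
    by (simp add: lookup_sum lookup_single)
  also have "\<dots> = Poly_Mapping.lookup p x"
    by (cases "x \<in> Poly_Mapping.keys p") (auto simp: when_def in_keys_iff)
  finally show "Poly_Mapping.lookup p x = Poly_Mapping.lookup (\<Sum>m\<in>Poly_Mapping.keys p. Poly_Mapping.single m (Poly_Mapping.lookup p m)) x" by simp
qed

lemma single_cscale: "Poly_Mapping.single m c = cscale c (Poly_Mapping.single m 1)"
  by (simp add: cscale_def mult_single)




definition Mons :: "mpoly set" where "Mons = {Mon i a c | i a c. True}"
definition MonsD :: "nat \<Rightarrow> mpoly set" where "MonsD d = {Mon i a c | i a c. i + a + 2*c = d}"

lemma span_mult_into:
  assumes "x \<in> cs.span S" "\<And>s. s \<in> S \<Longrightarrow> q * s \<in> cs.span T"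
  shows "q * x \<in> cs.span T"
  using assms(1)
proof (induction rule: cs.span_induct)
  case base
  show ?case by (rule cs.subspaceI) (auto simp: distrib_left cs.span_add cs.span_scale cs.span_zero)
next
  case (step x) then show ?case using assms(2) by simp
qed

lemma span_mult_into_left:
  assumes "x \<in> cs.span S" "\<And>s. s \<in> S \<Longrightarrow> s * q \<in> cs.span T"
  shows "x * q \<in> cs.span T"
  using span_mult_into[OF assms(1), of q T] assms(2) by (simp add: mult.commute)

lemma keys_mult_sub: "m \<in> Poly_Mapping.keys (p * q) \<Longrightarrow> \<exists>a b. a \<in> Poly_Mapping.keys p \<and> b \<in> Poly_Mapping.keys q \<and> m = a + b"
  using keys_mult[of p q] by blast

lemma keys_nat_add: "Poly_Mapping.keys ((a::nat \<Rightarrow>\<^sub>0 nat) + b) = Poly_Mapping.keys a \<union> Poly_Mapping.keys b"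
  by (auto simp: in_keys_iff Poly_Mapping.lookup_add)

lemma wdeg_add: "wdeg (a + b) = wdeg a + wdeg b"
  by (simp add: wdeg_def Poly_Mapping.lookup_add)

lemma polys3_mult: assumes "p \<in> polys3" "q \<in> polys3" shows "p * q \<in> polys3"
  unfolding polys3_def mem_Collect_eq
proof (intro ballI)
  fix m assume "m \<in> Poly_Mapping.keys (p * q)"
  then obtain a b where "a \<in> Poly_Mapping.keys p" "b \<in> Poly_Mapping.keys q" "m = a + b"
    using keys_mult_sub by blast
  moreover have "Poly_Mapping.keys m = Poly_Mapping.keys a \<union> Poly_Mapping.keys b"
    using \<open>m = a + b\<close> keys_nat_add by simp
  ultimately show "Poly_Mapping.keys m \<subseteq> {0, 1, 2}" using assms unfolding polys3_def by auto
qed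

lemma polys3_add: "p \<in> polys3 \<Longrightarrow> q \<in> polys3 \<Longrightarrow> p + q \<in> polys3"
  unfolding polys3_def using keys_add[of p q] by (auto simp: subset_iff)

lemma keys_uminus: "Poly_Mapping.keys (- (p::mpoly)) = Poly_Mapping.keys p"
  by (metis (no_types, opaque_lifting) in_keys_iff lookup_uminus neg_equal_0_iff_equal subsetI subset_antisym)

lemma polys3_uminus: "p \<in> polys3 \<Longrightarrow> - p \<in> polys3"
  unfolding polys3_def by (simp add: keys_uminus)

lemma polys3_diff: "p \<in> polys3 \<Longrightarrow> q \<in> polys3 \<Longrightarrow> p - q \<in> polys3"
  using polys3_add[of p "-q"] polys3_uminus by simp

lemma Mon_polys3: "Mon i a c \<in> polys3"
  unfolding polys3_def Mon_def using keys_mexp by auto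

lemma cscale_single0: "Poly_Mapping.single 0 c \<in> polys3"
  unfolding polys3_def by auto

lemma polys3_cscale: "p \<in> polys3 \<Longrightarrow> cscale c p \<in> polys3"
  unfolding cscale_def by (rule polys3_mult[OF cscale_single0])

lemma zero_polys3: "0 \<in> polys3" unfolding polys3_def by simp

lemma polys3_span: "cs.span Mons \<subseteq> polys3"
  by (rule cs.span_minimal) (auto simp: Mons_def Mon_polys3 cs.subspace_def zero_polys3 polys3_add polys3_cscale)

lemma polys3_in_span: assumes "p \<in> polys3" shows "p \<in> cs.span Mons"
proof -
  have "p = (\<Sum>m\<in>Poly_Mapping.keys p. Poly_Mapping.single m (Poly_Mapping.lookup p m))"
    by (rule poly_expand)
  also have "\<dots> \<in> cs.span Mons"
  proof (rule cs.span_sum)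
    fix m assume m: "m \<in> Poly_Mapping.keys p"
    then have "Poly_Mapping.keys m \<subseteq> {0,1,2}" using assms by (auto simp: polys3_def)
    then have "Poly_Mapping.single m 1 = Mon (Poly_Mapping.lookup m 0) (Poly_Mapping.lookup m 1) (Poly_Mapping.lookup m 2)"
      unfolding Mon_def using mexp_of by metis
    then show "Poly_Mapping.single m (Poly_Mapping.lookup p m) \<in> cs.span Mons"
      by (metis (mono_tags, lifting) Mons_def cs.span_base cs.span_scale mem_Collect_eq single_cscale)
  qed
  finally show ?thesis .
qed

lemma homog_in_span: assumes "p \<in> homog d" shows "p \<in> cs.span (MonsD d)"
proof -
  have "p = (\<Sum>m\<in>Poly_Mapping.keys p. Poly_Mapping.single m (Poly_Mapping.lookup p m))"
    by (rule poly_expand)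
  also have "\<dots> \<in> cs.span (MonsD d)"
  proof (rule cs.span_sum)
    fix m assume m: "m \<in> Poly_Mapping.keys p"
    then have k: "Poly_Mapping.keys m \<subseteq> {0,1,2}" and w: "wdeg m = d" using assms by (auto simp: polys3_def homog_def)
    then have e: "m = mexp (Poly_Mapping.lookup m 0) (Poly_Mapping.lookup m 1) (Poly_Mapping.lookup m 2)"
      using mexp_of by metis
    then have "Poly_Mapping.single m 1 = Mon (Poly_Mapping.lookup m 0) (Poly_Mapping.lookup m 1) (Poly_Mapping.lookup m 2)"
      unfolding Mon_def by metis
    moreover have "Poly_Mapping.lookup m 0 + Poly_Mapping.lookup m 1 + 2 * Poly_Mapping.lookup m 2 = d"
      using w e by (metis wdeg_mexp)
    ultimately show "Poly_Mapping.single m (Poly_Mapping.lookup p m) \<in> cs.span (MonsD d)"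
      by (metis (mono_tags, lifting) MonsD_def cs.span_base cs.span_scale mem_Collect_eq single_cscale)
  qed
  finally show ?thesis .
qed

lemma homog_subspace: "cs.subspace (homog d)"
proof (rule cs.subspaceI)
  show "0 \<in> homog d" by (simp add: homog_def zero_polys3)
next
  fix x y assume "x \<in> homog d" "y \<in> homog d"
  then show "x + y \<in> homog d" unfolding homog_def using polys3_add[of x y] keys_add[of x y] by (auto simp: subset_iff)
next
  fix c x assume x: "x \<in> homog d"
  have "Poly_Mapping.keys (cscale c x) \<subseteq> Poly_Mapping.keys x"
  proof
    fix m assume "m \<in> Poly_Mapping.keys (cscale c x)"
    then obtain a b where "a \<in> Poly_Mapping.keys (Poly_Mapping.single 0 c)" "b \<in> Poly_Mapping.keys x" "m = a + b"
      unfolding cscale_def using keys_mult_sub by blast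
    then show "m \<in> Poly_Mapping.keys x" by (simp split: if_splits)
  qed
  then show "cscale c x \<in> homog d" using x polys3_cscale unfolding homog_def by blast
qed

lemma MonsD_homog: "Mon i a c \<in> homog (i + a + 2*c)"
  unfolding homog_def Mon_def using Mon_polys3[unfolded Mon_def] by auto

lemma span_MonsD_homog: "cs.span (MonsD d) \<subseteq> homog d"
  by (rule cs.span_minimal) (auto simp: MonsD_def MonsD_homog homog_subspace)

lemma homog_eq_span: "homog d = cs.span (MonsD d)"
  using span_MonsD_homog homog_in_span by blast

lemma homog_mult: assumes "p \<in> homog d1" "q \<in> homog d2" shows "p * q \<in> homog (d1 + d2)"
proof -
  have "p * q \<in> polys3" using assms polys3_mult unfolding homog_def by blast
  moreover have "wdeg m = d1 + d2" if mk: "m \<in> Poly_Mapping.keys (p * q)" for m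
  proof -
    obtain a b where "a \<in> Poly_Mapping.keys p" "b \<in> Poly_Mapping.keys q" "m = a + b"
      using keys_mult_sub[OF mk] by blast
    then show ?thesis using assms unfolding homog_def by (simp add: wdeg_add)
  qed
  ultimately show ?thesis unfolding homog_def by blast
qed

lemma Mon_pow_prod: "Mon i a c = vb ^ i * vt ^ a * vk ^ c"
  by (simp add: var_pow_Mon Mon_mult)

lemma mult_closed:
  assumes U: "cs.subspace U" and b: "\<And>u. u \<in> U \<Longrightarrow> vb * u \<in> U"
    and t: "\<And>u. u \<in> U \<Longrightarrow> vt * u \<in> U" and k: "\<And>u. u \<in> U \<Longrightarrow> vk * u \<in> U"
    and p: "p \<in> polys3" and u: "u \<in> U"
  shows "p * u \<in> U"
proof -
  have pw: "\<And>u. u \<in> U \<Longrightarrow> v ^ e * u \<in> U" if "\<And>u. u \<in> U \<Longrightarrow> v * u \<in> U" for v :: mpoly and e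
    using that by (induction e) (auto simp: mult.assoc)
  have M: "Mon i a c * u \<in> U" if "u \<in> U" for i a c u
    unfolding Mon_pow_prod using pw[OF b] pw[OF t] pw[OF k] that by (simp add: mult.assoc)
  have "p \<in> cs.span Mons" using p by (rule polys3_in_span)
  then show ?thesis
  proof (induction rule: cs.span_induct)
    case base
    show ?case using U by (intro cs.subspaceI) (auto simp: distrib_right cs.subspace_def)
  next
    case (step x) then show ?case using M u by (auto simp: Mons_def)
  qed
qed




fun Pp :: "nat \<Rightarrow> mpoly" where
  "Pp 0 = 2"
| "Pp (Suc 0) = vt"
| "Pp (Suc (Suc m)) = vt * Pp (Suc m) + vk * Pp m"

fun Zs :: "nat \<Rightarrow> mpoly" where
  "Zs 0 = 0"
| "Zs (Suc m) = vb * Zs m + Pp m"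

fun Rs :: "nat \<Rightarrow> mpoly" where
  "Rs 0 = 0"
| "Rs (Suc m) = vb * Rs m + Pp (Suc m)"

lemma Zs_Rs: "Zs (Suc m) = 2 * vb ^ m + Rs m"
  by (induction m) (simp_all add: algebra_simps)

lemma Zs_D: "Zs (Suc (Suc m)) - vt * Zs (Suc m) - vk * Zs m = vb ^ m * (2 * vb - vt)"
proof (induction m)
  case 0 then show ?case by (simp add: algebra_simps)
next
  case (Suc m)
  have "Zs (Suc (Suc (Suc m))) - vt * Zs (Suc (Suc m)) - vk * Zs (Suc m)
      = vb * (Zs (Suc (Suc m)) - vt * Zs (Suc m) - vk * Zs m)
        + (Pp (Suc (Suc m)) - vt * Pp (Suc m) - vk * Pp m)"
    by (simp add: algebra_simps)
  also have "\<dots> = vb * (vb ^ m * (2 * vb - vt))" using Suc by simp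
  finally show ?case by (simp add: algebra_simps)
qed

definition Gv :: "nat \<Rightarrow> mpoly ^ 3" where
  "Gv m = vector [vb ^ Suc m * (2 * vb - vt), Zs (Suc (Suc m)) - vt * Zs (Suc m), Zs (Suc m)]"

lemma Zs12: "Zs 1 = 2" "Zs 2 = 2 * vb + vt"
  by (simp_all add: numeral_2_eq_2)

lemma G1_Gv: "G1 = Gv 0"
proof -
  have "2 * vb + vt - vt * 2 = 2 * vb - (vt::mpoly)" by (simp add: algebra_simps)
  then show ?thesis by (simp add: G1_def Gv_def mult.commute)
qed

lemma matA_Gv: "matA *v Gv m = Gv (Suc m)"
proof -
  have D: "Zs (Suc (Suc (Suc m))) - vt * Zs (Suc (Suc m)) = vb ^ Suc m * (2 * vb - vt) + vk * Zs (Suc m)"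
    using Zs_D[of "Suc m"] by (simp add: algebra_simps del: Zs.simps)
  have S: "(matA *v v) $ j = (\<Sum>i\<in>UNIV. matA $ j $ i * v $ i)" for v j
    by (simp add: matrix_vector_mult_def)
  show ?thesis
    unfolding vec_eq_iff forall_3 S sum_3
    by (simp add: matA_def Gv_def D del: Zs.simps)
qed

lemma matpow_Gv: "matpow matA m *v G1 = Gv m"
proof (induction m)
  case 0 then show ?case by (simp add: G1_Gv)
next
  case (Suc m)
  have "matpow matA (Suc m) *v G1 = matA *v (matpow matA m *v G1)"
    by (simp add: matrix_vector_mul_assoc)
  then show ?case using Suc matA_Gv by simp
qed

lemma G_Gv: "G (n + 1) = Gv n"
  by (simp add: G_def matpow_Gv)

definition All2 :: "nat \<Rightarrow> mpoly set" where "All2 m = {Mon 0 a c | a c. a + 2*c = m}"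
definition Lt2 :: "nat \<Rightarrow> mpoly set" where "Lt2 m = {Mon 0 a c | a c. a + 2*c = m \<and> a < m}"
definition Rb :: "nat \<Rightarrow> mpoly set" where "Rb m = {Mon i a c | i a c. i + a + 2*c = m \<and> i < m}"

lemma two_Mon: "(2::mpoly) = cscale 2 (Mon 0 0 0)"
  by (simp add: cscale_def)

lemma shift_span: "(\<And>s. s \<in> S \<Longrightarrow> q * s \<in> T) \<Longrightarrow> x \<in> cs.span S \<Longrightarrow> q * x \<in> cs.span T"
  using span_mult_into cs.span_base by metis

lemma All2_t: "s \<in> All2 m \<Longrightarrow> vt * s \<in> All2 (Suc m)"
proof -
  assume "s \<in> All2 m"
  then obtain a c where "s = Mon 0 a c" "a + 2*c = m" unfolding All2_def by blast
  note h = this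
  show ?thesis unfolding All2_def vt_Mon Mon_mult
    by (rule CollectI, rule exI[of _ "Suc a"], rule exI[of _ c]) (insert h, auto simp: Mon_mult)
qed

lemma All2_k: "s \<in> All2 m \<Longrightarrow> vk * s \<in> All2 (Suc (Suc m))"
proof -
  assume "s \<in> All2 m"
  then obtain a c where "s = Mon 0 a c" "a + 2*c = m" unfolding All2_def by blast
  note h = this
  show ?thesis unfolding All2_def vk_Mon Mon_mult
    by (rule CollectI, rule exI[of _ a], rule exI[of _ "Suc c"]) (insert h, auto simp: Mon_mult)
qed

lemma All2_k_Lt: "s \<in> All2 m \<Longrightarrow> vk * s \<in> Lt2 (Suc (Suc m))"
proof -
  assume "s \<in> All2 m"
  then obtain a c where "s = Mon 0 a c" "a + 2*c = m" unfolding All2_def by blast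
  note h = this
  show ?thesis unfolding Lt2_def vk_Mon Mon_mult
    by (rule CollectI, rule exI[of _ a], rule exI[of _ "Suc c"]) (insert h, auto simp: Mon_mult)
qed

lemma Lt2_t: "s \<in> Lt2 m \<Longrightarrow> vt * s \<in> Lt2 (Suc m)"
proof -
  assume "s \<in> Lt2 m"
  then obtain a c where "s = Mon 0 a c" "a + 2*c = m" "a < m" unfolding Lt2_def by blast
  note h = this
  show ?thesis unfolding Lt2_def vt_Mon Mon_mult
    by (rule CollectI, rule exI[of _ "Suc a"], rule exI[of _ c]) (insert h, auto simp: Mon_mult)
qed

lemma Pp_span: "Pp m \<in> cs.span (All2 m) \<and> (m > 0 \<longrightarrow> Pp m - vt ^ m \<in> cs.span (Lt2 m))"
proof (induction m rule: Pp.induct)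
  case 1
  have "Mon 0 0 0 \<in> All2 0" unfolding All2_def by (intro CollectI exI[of _ 0]) simp
  then have "cscale 2 (Mon 0 0 0) \<in> cs.span (All2 0)" by (intro cs.span_scale cs.span_base)
  then show ?case by (simp only: two_Mon[symmetric] Pp.simps) simp
next
  case 2
  have "Mon 0 1 0 \<in> All2 1" unfolding All2_def by (rule CollectI, rule exI[of _ 1], rule exI[of _ 0]) (simp add: Mon_mult)
  then have "vt \<in> cs.span (All2 1)" unfolding vt_Mon by (rule cs.span_base)
  moreover have "vt - vt ^ 1 \<in> cs.span (Lt2 1)" by (simp add: cs.span_zero)
  ultimately show ?case by simp
next
  case (3 m)
  have A1: "vt * Pp (Suc m) \<in> cs.span (All2 (Suc (Suc m)))"
    using 3 All2_t by (intro shift_span[where S="All2 (Suc m)"]) auto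
  have A2: "vk * Pp m \<in> cs.span (All2 (Suc (Suc m)))"
    using 3 All2_k by (intro shift_span[where S="All2 m"]) auto
  have L2: "vk * Pp m \<in> cs.span (Lt2 (Suc (Suc m)))"
    using 3 All2_k_Lt by (intro shift_span[where S="All2 m"]) auto
  have L1: "vt * (Pp (Suc m) - vt ^ Suc m) \<in> cs.span (Lt2 (Suc (Suc m)))"
    using 3 Lt2_t by (intro shift_span[where S="Lt2 (Suc m)"]) auto
  have e: "Pp (Suc (Suc m)) - vt ^ Suc (Suc m) = vt * (Pp (Suc m) - vt ^ Suc m) + vk * Pp m"
    by (simp add: algebra_simps)
  have "Pp (Suc (Suc m)) \<in> cs.span (All2 (Suc (Suc m)))"
    using A1 A2 by (simp add: cs.span_add)
  moreover have "Pp (Suc (Suc m)) - vt ^ Suc (Suc m) \<in> cs.span (Lt2 (Suc (Suc m)))"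
    unfolding e by (rule cs.span_add[OF L1 L2])
  ultimately show ?case by blast
qed

lemma Pp_homog: "Pp m \<in> homog m"
proof -
  have "All2 m \<subseteq> MonsD m"
  proof
    fix x assume "x \<in> All2 m"
    then obtain a c where "x = Mon 0 a c" "a + 2*c = m" unfolding All2_def by blast
    then show "x \<in> MonsD m" unfolding MonsD_def by (intro CollectI exI[of _ 0] exI[of _ a] exI[of _ c]) simp
  qed
  then have "cs.span (All2 m) \<subseteq> cs.span (MonsD m)" by (rule cs.span_mono)
  then have "cs.span (All2 m) \<subseteq> homog m" unfolding homog_eq_span .
  then show ?thesis using Pp_span[of m] by (meson subsetD)
qed

lemma Rb_b: "s \<in> Rb m \<Longrightarrow> vb * s \<in> Rb (Suc m)"
proof -
  assume "s \<in> Rb m"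
  then obtain i a c where "s = Mon i a c" "i + a + 2*c = m" "i < m" unfolding Rb_def by blast
  note h = this
  show ?thesis unfolding Rb_def vb_Mon
    by (rule CollectI, rule exI[of _ "Suc i"], rule exI[of _ a], rule exI[of _ c]) (insert h, auto simp: Mon_mult)
qed

lemma All2_Rb: "All2 (Suc m) \<subseteq> Rb (Suc m)"
proof
  fix x assume "x \<in> All2 (Suc m)"
  then obtain a c where h: "x = Mon 0 a c" "a + 2*c = Suc m" unfolding All2_def by blast
  show "x \<in> Rb (Suc m)" unfolding Rb_def
    by (rule CollectI, rule exI[of _ 0], rule exI[of _ a], rule exI[of _ c]) (insert h, auto)
qed

lemma Rb_MonsD: "Rb m \<subseteq> MonsD m"
proof
  fix x assume "x \<in> Rb m"
  then obtain i a c where h: "x = Mon i a c" "i + a + 2*c = m" unfolding Rb_def by blast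
  show "x \<in> MonsD m" unfolding MonsD_def
    by (rule CollectI, rule exI[of _ i], rule exI[of _ a], rule exI[of _ c]) (insert h, auto)
qed

lemma Rs_span: "Rs m \<in> cs.span (Rb m)"
proof (induction m)
  case 0 then show ?case by (simp add: cs.span_zero)
next
  case (Suc m)
  have A: "vb * Rs m \<in> cs.span (Rb (Suc m))"
    using Suc Rb_b by (intro shift_span[where S="Rb m"]) auto
  have "cs.span (All2 (Suc m)) \<subseteq> cs.span (Rb (Suc m))" using All2_Rb by (rule cs.span_mono)
  then have B: "Pp (Suc m) \<in> cs.span (Rb (Suc m))" using Pp_span[of "Suc m"] by (meson subsetD)
  show ?case using A B by (simp add: cs.span_add)
qed

lemma Rs_homog: "Rs m \<in> homog m"
proof -
  have "cs.span (Rb m) \<subseteq> cs.span (MonsD m)" using Rb_MonsD by (rule cs.span_mono)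
  then have "cs.span (Rb m) \<subseteq> homog m" unfolding homog_eq_span .
  then show ?thesis using Rs_span[of m] by (meson subsetD)
qed

lemma vb_homog: "vb ^ e \<in> homog e" using MonsD_homog[of e 0 0] by (simp add: var_pow_Mon)

lemma homog_add: "p \<in> homog d \<Longrightarrow> q \<in> homog d \<Longrightarrow> p + q \<in> homog d"
  using homog_subspace[of d] unfolding cs.subspace_def by blast

lemma homog_scale: "p \<in> homog d \<Longrightarrow> cscale c p \<in> homog d"
  using homog_subspace[of d] unfolding cs.subspace_def by blast

lemma homog_two: "p \<in> homog d \<Longrightarrow> 2 * p \<in> homog d"
  using homog_scale[of p d 2] by (simp add: cscale_def)

lemma Zs_homog: "Zs (Suc m) \<in> homog m"
  unfolding Zs_Rs by (intro homog_add homog_two vb_homog Rs_homog)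




lemma one_polys3: "1 \<in> polys3" using Mon_polys3[of 0 0 0] by simp
lemma vb_polys3: "vb \<in> polys3" and vt_polys3: "vt \<in> polys3" and vk_polys3: "vk \<in> polys3"
  by (simp_all add: vb_Mon vt_Mon vk_Mon Mon_polys3)

lemma homog_polys3: "p \<in> homog d \<Longrightarrow> p \<in> polys3" by (simp add: homog_def)

lemma ideal_add: assumes "x \<in> gen_ideal g" "y \<in> gen_ideal g" shows "x + y \<in> gen_ideal g"
proof -
  obtain a where a: "x = (\<Sum>i\<in>UNIV. a $ i * g $ i)" "\<forall>i. a $ i \<in> polys3" using assms(1) by (auto simp: gen_ideal_def)
  obtain b where b: "y = (\<Sum>i\<in>UNIV. b $ i * g $ i)" "\<forall>i. b $ i \<in> polys3" using assms(2) by (auto simp: gen_ideal_def)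
  have "x + y = (\<Sum>i\<in>UNIV. (a + b) $ i * g $ i)" using a b by (simp add: sum.distrib distrib_right)
  moreover have "\<forall>i. (a + b) $ i \<in> polys3" using a b polys3_add by simp
  ultimately show ?thesis unfolding gen_ideal_def by blast
qed

lemma ideal_mult: assumes "p \<in> polys3" "x \<in> gen_ideal g" shows "p * x \<in> gen_ideal g"
proof -
  obtain a where a: "x = (\<Sum>i\<in>UNIV. a $ i * g $ i)" "\<forall>i. a $ i \<in> polys3" using assms(2) by (auto simp: gen_ideal_def)
  have "p * x = (\<Sum>i\<in>UNIV. (\<chi> j. p * a $ j) $ i * g $ i)" using a by (simp add: sum_distrib_left mult.assoc)
  moreover have "\<forall>i. (\<chi> j. p * a $ j) $ i \<in> polys3" using a assms(1) polys3_mult by simp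
  ultimately show ?thesis unfolding gen_ideal_def by blast
qed

lemma ideal_gen: "g $ j \<in> gen_ideal g"
proof -
  have "\<And>i. (\<chi> k. if k = j then 1 else 0) $ i * g $ i = (if i = j then g $ i else 0)" by simp
  then have "(\<Sum>i\<in>UNIV. (\<chi> k. if k = j then 1 else 0) $ i * g $ i) = (\<Sum>i\<in>UNIV. if i = j then g $ i else 0)"
    by presburger
  also have "\<dots> = g $ j" by (simp add: sum.delta)
  finally have "g $ j = (\<Sum>i\<in>UNIV. (\<chi> k. if k = j then 1 else 0) $ i * g $ i)" by simp
  moreover have "\<forall>i. (\<chi> k. if k = j then (1::mpoly) else 0) $ i \<in> polys3" using one_polys3 zero_polys3 by simp
  ultimately show ?thesis unfolding gen_ideal_def by blast
qed

lemma ideal_neg: assumes "x \<in> gen_ideal g" shows "- x \<in> gen_ideal g"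
  using ideal_mult[OF polys3_uminus[OF one_polys3] assms] by simp

lemma ideal_diff: "x \<in> gen_ideal g \<Longrightarrow> y \<in> gen_ideal g \<Longrightarrow> x - y \<in> gen_ideal g"
  using ideal_add[of x g "- y"] ideal_neg[of y g] by simp

lemma ideal_zero: "0 \<in> gen_ideal g"
  using ideal_mult[OF zero_polys3 ideal_gen[of g 1]] by simp

lemma Pp_polys3: "Pp m \<in> polys3" using Pp_homog homog_polys3 by blast
lemma Zs_polys3: "Zs m \<in> polys3"
proof (cases m)
  case 0 then show ?thesis by (simp add: zero_polys3)
next
  case (Suc k) show ?thesis unfolding Suc by (rule homog_polys3[OF Zs_homog])
qed

lemma Gv1: "Gv n $ 1 = vb ^ Suc n * (2 * vb - vt)"
  and Gv2: "Gv n $ 2 = Zs (Suc (Suc n)) - vt * Zs (Suc n)"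
  and Gv3: "Gv n $ 3 = Zs (Suc n)"
  by (simp_all add: Gv_def)

abbreviation Idl :: "nat \<Rightarrow> mpoly set" where "Idl n \<equiv> gen_ideal (Gv n)"

lemma Z_in: "Zs (Suc n) \<in> Idl n" using ideal_gen[of "Gv n" 3] by (simp add: Gv3)

lemma P1_in: "Pp (Suc n) \<in> Idl n"
proof -
  have e: "Pp (Suc n) = Gv n $ 2 + (vt - vb) * Gv n $ 3"
    by (simp add: Gv2 Gv3 algebra_simps del: Zs.simps) (simp add: algebra_simps)
  show ?thesis unfolding e
    by (intro ideal_add ideal_mult ideal_gen polys3_diff vt_polys3 vb_polys3)
qed

lemma P2_in: "Pp (Suc (Suc n)) \<in> Idl n"
proof -
  have D: "Zs (Suc (Suc (Suc n))) - vt * Zs (Suc (Suc n)) - vk * Zs (Suc n) = Gv n $ 1"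
    using Zs_D[of "Suc n"] by (simp add: Gv1 del: Zs.simps)
  have Z3: "Zs (Suc (Suc (Suc n))) = vb * Zs (Suc (Suc n)) + Pp (Suc (Suc n))" by simp
  have e: "Pp (Suc (Suc n)) = Gv n $ 1 + (vt - vb) * (Gv n $ 2 + vt * Gv n $ 3) + vk * Gv n $ 3"
    using D unfolding Gv2 Gv3 Z3 by (simp add: algebra_simps)
  show ?thesis unfolding e
    by (intro ideal_add ideal_mult ideal_gen polys3_diff polys3_mult vt_polys3 vb_polys3 vk_polys3)
qed

lemma Q_in: assumes "n \<ge> 1" shows "j \<le> n \<Longrightarrow> vk ^ j * Pp (Suc n - j) \<in> Idl n \<and> vk ^ Suc j * Pp (n - j) \<in> Idl n"
proof (induction j)
  case 0
  have "vk * Pp n = Pp (Suc (Suc n)) - vt * Pp (Suc n)" by simp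
  then have "vk * Pp n \<in> Idl n" using ideal_diff[OF P2_in ideal_mult[OF vt_polys3 P1_in]] by (simp del: Pp.simps)
  then show ?case using P1_in by simp
next
  case (Suc j)
  then have IH: "vk ^ j * Pp (Suc n - j) \<in> Idl n" "vk ^ Suc j * Pp (n - j) \<in> Idl n" by auto
  have nj: "Suc n - j = Suc (Suc (n - Suc j))" "n - j = Suc (n - Suc j)" using Suc.prems by auto
  have "vk ^ Suc (Suc j) * Pp (n - Suc j) = vk * (vk ^ j * Pp (Suc n - j)) - vt * (vk ^ Suc j * Pp (n - j))"
    unfolding nj by (simp add: algebra_simps)
  then have "vk ^ Suc (Suc j) * Pp (n - Suc j) \<in> Idl n"
    using IH by (simp add: ideal_diff ideal_mult vt_polys3 vk_polys3)
  moreover have "Suc n - Suc j = n - j" by simp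
  ultimately show ?case using IH by simp
qed

lemma Q_in': assumes "n \<ge> 1" "j \<le> Suc n" shows "vk ^ j * Pp (Suc n - j) \<in> Idl n"
proof (cases "j = Suc n")
  case True
  then show ?thesis using Q_in[OF assms(1), of n] by simp
next
  case False then show ?thesis using Q_in[OF assms(1), of j] assms by simp
qed

lemma Mon_ideal: "x \<in> Idl n \<Longrightarrow> Mon i a c * x \<in> Idl n"
  by (rule ideal_mult[OF Mon_polys3])

lemma std4_in: assumes "n \<ge> 1" "a \<le> n" "a + c \<ge> Suc n"
  shows "Mon i 0 c * Pp a \<in> Idl n"
proof -
  define j where "j = Suc n - a"
  have jc: "j \<le> c" "j \<le> Suc n" and aj: "a = Suc n - j" using assms by (auto simp: j_def)
  have "Mon i 0 c * Pp a = Mon i 0 (c - j) * (vk ^ j * Pp (Suc n - j))"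
    using jc aj by (simp add: var_pow_Mon mult.assoc[symmetric] Mon_mult)
  then show ?thesis using Mon_ideal Q_in'[OF assms(1) jc(2)] by simp
qed




definition Std :: "nat \<Rightarrow> nat \<Rightarrow> mpoly set" where
  "Std n d = {Mon i a c | i a c. i + a + 2*c = d \<and> i < n \<and> a + c \<le> n}"

lemma Mon_homog': "i + a + 2*c = d \<Longrightarrow> Mon i a c \<in> homog d"
  using MonsD_homog by blast

lemma shift_sub: assumes "\<And>s. s \<in> S \<Longrightarrow> q * s \<in> X" "cs.subspace X" "x \<in> cs.span S" shows "q * x \<in> X"
proof -
  have "q * x \<in> cs.span X" using assms(1,3) span_mult_into cs.span_base by metis
  then show ?thesis using cs.span_eq_iff assms(2) by blast
qed

lemma red_A:
  assumes n1: "n \<ge> 1"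
  shows "i + a + 2*c = d \<Longrightarrow> Mon i a c \<in> cs.span ((Idl n \<inter> homog d) \<union> Std n d)"
proof (induction i arbitrary: a c rule: less_induct)
  case (less i)
  define X where "X = cs.span ((Idl n \<inter> homog d) \<union> Std n d)"
  have inX: "h \<in> X" if "h \<in> Idl n" "h \<in> homog d" for h
    unfolding X_def using that by (intro cs.span_base) blast
  have sX: "cs.subspace X" unfolding X_def by (rule cs.subspace_span)
  have IHi: "Mon i' a' c' \<in> X" if "i' < i" "i' + a' + 2*c' = d" for i' a' c'
    using less.IH that unfolding X_def by blast
  show ?case unfolding X_def[symmetric] using less.prems
  proof (induction a arbitrary: c rule: less_induct)
    case (less a)
    have IHa: "Mon i a' c' \<in> X" if "a' < a" "i + a' + 2*c' = d" for a' c'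
      using less.IH that by blast
    show ?case
    proof (cases "i \<ge> n")
      case True
      define h where "h = Mon (i - n) a c * Zs (Suc n)"
      have hI: "h \<in> Idl n" unfolding h_def by (rule Mon_ideal[OF Z_in])
      have hH: "h \<in> homog d" unfolding h_def
        using homog_mult[OF Mon_homog'[of "i - n" a c "i - n + a + 2*c"] Zs_homog[of n]] less.prems True by simp
      have e: "h = 2 * Mon i a c + Mon (i - n) a c * Rs n"
        unfolding h_def Zs_Rs using True by (simp add: algebra_simps var_pow_Mon Mon_mult)
      have low: "Mon (i - n) a c * Rs n \<in> X"
      proof (rule shift_sub[OF _ sX Rs_span])
        fix s assume "s \<in> Rb n"
        then obtain i' a' c' where s: "s = Mon i' a' c'" "i' + a' + 2*c' = n" "i' < n" unfolding Rb_def by blast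
        then have "Mon (i - n) a c * s = Mon (i - n + i') (a + a') (c + c')" by (simp add: Mon_mult)
        moreover have "i - n + i' < i" "(i - n + i') + (a + a') + 2 * (c + c') = d"
          using s True less.prems by auto
        ultimately show "Mon (i - n) a c * s \<in> X" using IHi by simp
      qed
      have "cscale 2 (Mon i a c) = h - Mon (i - n) a c * Rs n"
        using e by (simp add: cscale_def)
      then have "cscale 2 (Mon i a c) \<in> X" using inX[OF hI hH] low unfolding X_def by (simp add: cs.span_diff)
      then have "cscale (1/2) (cscale 2 (Mon i a c)) \<in> X" unfolding X_def by (rule cs.span_scale)
      then show ?thesis by simp
    next
      case False
      then have iN: "i < n" by simp
      show ?thesis
      proof (cases "a + c \<le> n")
        case True
        then have "Mon i a c \<in> Std n d" unfolding Std_def using iN less.prems by blast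
        then show ?thesis unfolding X_def by (intro cs.span_base) blast
      next
        case ac: False
        show ?thesis
        proof (cases "a \<ge> Suc n")
          case True
          define h where "h = Mon i (a - Suc n) c * Pp (Suc n)"
          have hI: "h \<in> Idl n" unfolding h_def by (rule Mon_ideal[OF P1_in])
          have hH: "h \<in> homog d" unfolding h_def
            using homog_mult[OF Mon_homog'[of i "a - Suc n" c "i + (a - Suc n) + 2*c"] Pp_homog[of "Suc n"]] less.prems True by simp
          have mm: "Mon i (a - Suc n) c * vt ^ Suc n = Mon i a c"
            unfolding var_pow_Mon Mon_mult using True by simp
          have e: "h = Mon i a c + Mon i (a - Suc n) c * (Pp (Suc n) - vt ^ Suc n)"
            unfolding h_def right_diff_distrib mm by simp
          have low: "Mon i (a - Suc n) c * (Pp (Suc n) - vt ^ Suc n) \<in> X"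
          proof (rule shift_sub[OF _ sX])
            show "Pp (Suc n) - vt ^ Suc n \<in> cs.span (Lt2 (Suc n))" using Pp_span[of "Suc n"] by simp
          next
            fix s assume "s \<in> Lt2 (Suc n)"
            then obtain a' c' where s: "s = Mon 0 a' c'" "a' + 2*c' = Suc n" "a' < Suc n" unfolding Lt2_def by blast
            then have "Mon i (a - Suc n) c * s = Mon i (a - Suc n + a') (c + c')" by (simp add: Mon_mult)
            moreover have "a - Suc n + a' < a" "i + (a - Suc n + a') + 2 * (c + c') = d"
              using s True less.prems by auto
            ultimately show "Mon i (a - Suc n) c * s \<in> X" using IHa by simp
          qed
          have "Mon i a c = h - Mon i (a - Suc n) c * (Pp (Suc n) - vt ^ Suc n)" using e by simp
          then show ?thesis using inX[OF hI hH] low unfolding X_def by (simp add: cs.span_diff)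
        next
          case False
          then have an: "a \<le> n" by simp
          define h where "h = Mon i 0 c * Pp a"
          have hI: "h \<in> Idl n" unfolding h_def using std4_in[OF n1 an] ac by simp
          have hH: "h \<in> homog d" unfolding h_def
          proof -
            have "i + 2 * c + a = d" using less.prems by simp
            then show "Mon i 0 c * Pp a \<in> homog d"
              using homog_mult[OF Mon_homog'[of i 0 c "i + 2*c"] Pp_homog[of a]] by simp
          qed
          show ?thesis
          proof (cases a)
            case 0
            have "h = cscale 2 (Mon i a c)" unfolding h_def using 0 by (simp add: cscale_def mult.commute)
            then have "cscale 2 (Mon i a c) \<in> X" using inX[OF hI hH] by simp
            then have "cscale (1/2) (cscale 2 (Mon i a c)) \<in> X" unfolding X_def by (rule cs.span_scale)
            then show ?thesis by simp
          next
            case (Suc a0)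
            have e: "h = Mon i a c + Mon i 0 c * (Pp a - vt ^ a)"
              unfolding h_def by (simp add: algebra_simps var_pow_Mon Mon_mult del: Pp.simps)
            have low: "Mon i 0 c * (Pp a - vt ^ a) \<in> X"
            proof (rule shift_sub[OF _ sX])
              show "Pp a - vt ^ a \<in> cs.span (Lt2 a)" using Pp_span[of a] Suc by simp
            next
              fix s assume "s \<in> Lt2 a"
              then obtain a' c' where s: "s = Mon 0 a' c'" "a' + 2*c' = a" "a' < a" unfolding Lt2_def by blast
              then have "Mon i 0 c * s = Mon i a' (c + c')" by (simp add: Mon_mult)
              moreover have "i + a' + 2 * (c + c') = d" using s less.prems by auto
              ultimately show "Mon i 0 c * s \<in> X" using IHa s by simp
            qed
            have "Mon i a c = h - Mon i 0 c * (Pp a - vt ^ a)" using e by simp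
            then show ?thesis using inX[OF hI hH] low unfolding X_def by (simp add: cs.span_diff)
          qed
        qed
      qed
    qed
  qed
qed




declare Zs.simps(2)[simp del]

definition T1s :: "nat \<Rightarrow> mpoly set" where
  "T1s n = {Mon e a c * Zs (Suc n) | e a c. True}"

definition T23 :: "nat \<Rightarrow> nat \<Rightarrow> mpoly set" where
  "T23 n e0 = {Mon i p c * Pp a | i p c a. i < e0 \<and> (a = Suc n \<or> (p = 0 \<and> a \<le> n \<and> Suc n \<le> a + c))}"

lemma T23I: "i < e0 \<Longrightarrow> (a = Suc n \<or> (p = 0 \<and> a \<le> n \<and> Suc n \<le> a + c)) \<Longrightarrow> Mon i p c * Pp a \<in> T23 n e0"
  unfolding T23_def by blast

lemma T23E: "s \<in> T23 n e0 \<Longrightarrow> (\<And>i p c a. s = Mon i p c * Pp a \<Longrightarrow> i < e0 \<Longrightarrow> (a = Suc n \<or> (p = 0 \<and> a \<le> n \<and> Suc n \<le> a + c)) \<Longrightarrow> R) \<Longrightarrow> R"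
  unfolding T23_def by blast

lemma T23_mono: "e0 \<le> e1 \<Longrightarrow> T23 n e0 \<subseteq> T23 n e1"
  by (auto elim!: T23E intro!: T23I)

lemma span_in: "x \<in> S \<Longrightarrow> x \<in> cs.span S" by (rule cs.span_base)

lemma T23_k: "s \<in> T23 n e0 \<Longrightarrow> vk * s \<in> T23 n e0"
proof (erule T23E)
  fix i p c a assume h: "s = Mon i p c * Pp a" "i < e0" "a = Suc n \<or> (p = 0 \<and> a \<le> n \<and> Suc n \<le> a + c)"
  have "vk * s = Mon i p (Suc c) * Pp a" unfolding h vk_Mon by (simp add: mult.assoc[symmetric] Mon_mult)
  moreover have "Mon i p (Suc c) * Pp a \<in> T23 n e0" using h by (intro T23I) auto
  ultimately show ?thesis by simp
qed

lemma T23_b: "s \<in> T23 n e0 \<Longrightarrow> vb * s \<in> T23 n (Suc e0)"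
proof (erule T23E)
  fix i p c a assume h: "s = Mon i p c * Pp a" "i < e0" "a = Suc n \<or> (p = 0 \<and> a \<le> n \<and> Suc n \<le> a + c)"
  have "vb * s = Mon (Suc i) p c * Pp a" unfolding h vb_Mon by (simp add: mult.assoc[symmetric] Mon_mult)
  moreover have "Mon (Suc i) p c * Pp a \<in> T23 n (Suc e0)" using h by (intro T23I) auto
  ultimately show ?thesis by simp
qed

lemma T23_t: assumes n1: "n \<ge> 1" shows "s \<in> T23 n e0 \<Longrightarrow> vt * s \<in> cs.span (T23 n e0)"
proof (erule T23E)
  fix i p c a assume h: "s = Mon i p c * Pp a" "i < e0" "a = Suc n \<or> (p = 0 \<and> a \<le> n \<and> Suc n \<le> a + c)"
  show "vt * s \<in> cs.span (T23 n e0)"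
  proof (cases "a = Suc n")
    case True
    have "vt * s = Mon i (Suc p) c * Pp a" unfolding h vt_Mon by (simp add: mult.assoc[symmetric] Mon_mult)
    moreover have "Mon i (Suc p) c * Pp a \<in> T23 n e0" using h True by (intro T23I) auto
    ultimately show ?thesis by (simp add: span_in)
  next
    case False
    then have h2: "p = 0" "a \<le> n" "Suc n \<le> a + c" using h by auto
    show ?thesis
    proof (cases a)
      case 0
      have "vt * s = cscale 2 (Mon i 0 c * Pp 1)" unfolding h h2 0
        by (simp add: cscale_def mult_ac)
      moreover have "Mon i 0 c * Pp 1 \<in> T23 n e0" using h(2) h2(3) 0 n1 by (intro T23I) auto
      ultimately show ?thesis by (simp add: span_in cs.span_scale)
    next
      case (Suc a0)
      have e1: "vt * Pp a = Pp (Suc a) - vk * Pp a0"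
        unfolding Suc by (cases a0) (simp_all add: algebra_simps)
      have "vt * s = Mon i 0 c * (vt * Pp a)" unfolding h h2 by (simp add: mult_ac)
      also have "\<dots> = Mon i 0 c * Pp (Suc a) - (Mon i 0 c * vk) * Pp a0"
        unfolding e1 by (simp add: algebra_simps)
      also have "Mon i 0 c * vk = Mon i 0 (Suc c)" by (simp add: vk_Mon Mon_mult)
      finally have "vt * s = Mon i 0 c * Pp (Suc a) - Mon i 0 (Suc c) * Pp a0" .
      moreover have "Mon i 0 c * Pp (Suc a) \<in> T23 n e0" using h h2 by (intro T23I) auto
      moreover have "Mon i 0 (Suc c) * Pp a0 \<in> T23 n e0" using h h2 Suc by (intro T23I) auto
      ultimately show ?thesis by (simp add: span_in cs.span_diff)
    qed
  qed
qed

lemma span_T23_t: "n \<ge> 1 \<Longrightarrow> w \<in> cs.span (T23 n e0) \<Longrightarrow> vt * w \<in> cs.span (T23 n e0)"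
  using span_mult_into T23_t by metis

lemma span_T23_k: "w \<in> cs.span (T23 n e0) \<Longrightarrow> vk * w \<in> cs.span (T23 n e0)"
  using span_mult_into[of w "T23 n e0" vk "T23 n e0"] T23_k span_in by metis

lemma span_T23_b: "w \<in> cs.span (T23 n e0) \<Longrightarrow> vb * w \<in> cs.span (T23 n (Suc e0))"
  using span_mult_into[of w "T23 n e0" vb "T23 n (Suc e0)"] T23_b span_in by metis

lemma span_T23_Pp: assumes n1: "n \<ge> 1" shows "w \<in> cs.span (T23 n e0) \<Longrightarrow> Pp j * w \<in> cs.span (T23 n e0)"
proof (induction j arbitrary: w rule: Pp.induct)
  case 1
  have "Pp 0 * w = cscale 2 w" by (simp add: cscale_def)
  then show ?case using cs.span_scale[OF 1, of 2] by (simp only:)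
next
  case 2 then show ?case using span_T23_t[OF n1] by simp
next
  case (3 m)
  have "Pp (Suc (Suc m)) * w = vt * (Pp (Suc m) * w) + vk * (Pp m * w)" by (simp add: algebra_simps)
  then show ?case using 3 span_T23_t[OF n1] span_T23_k cs.span_add by metis
qed

lemma span_T23_Rs: assumes n1: "n \<ge> 1" and w: "w \<in> cs.span (T23 n 1)"
  shows "Rs m * w \<in> cs.span (T23 n m)"
proof (induction m)
  case 0 then show ?case by (simp add: cs.span_zero)
next
  case (Suc m)
  have A': "vb * (Rs m * w) \<in> cs.span (T23 n (Suc m))" using span_T23_b Suc by blast
  have "Pp (Suc m) * w \<in> cs.span (T23 n 1)" using span_T23_Pp[OF n1 w] .
  moreover have "cs.span (T23 n 1) \<subseteq> cs.span (T23 n (Suc m))"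
    by (intro cs.span_mono T23_mono) simp
  ultimately have B: "Pp (Suc m) * w \<in> cs.span (T23 n (Suc m))" by blast
  have "Rs (Suc m) * w = vb * (Rs m * w) + Pp (Suc m) * w" by (simp add: algebra_simps)
  then show ?case using A' B cs.span_add by metis
qed

lemma T1s_mult: assumes "q \<in> polys3" shows "q * Zs (Suc n) \<in> cs.span (T1s n)"
proof -
  have "q \<in> cs.span Mons" using assms by (rule polys3_in_span)
  then show ?thesis
  proof (rule span_mult_into_left)
    fix s assume "s \<in> Mons"
    then obtain e a c where "s = Mon e a c" unfolding Mons_def by blast
    then have "s * Zs (Suc n) \<in> T1s n" unfolding T1s_def by blast
    then show "s * Zs (Suc n) \<in> cs.span (T1s n)" by (rule span_in)
  qed
qed

definition Wn :: "nat \<Rightarrow> mpoly set" where "Wn n = cs.span (T1s n \<union> T23 n n)"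

lemma Wn_sub: "cs.subspace (Wn n)" unfolding Wn_def by simp

lemma T1s_Wn: "cs.span (T1s n) \<subseteq> Wn n" unfolding Wn_def by (intro cs.span_mono) blast
lemma T23_Wn: "cs.span (T23 n n) \<subseteq> Wn n" unfolding Wn_def by (intro cs.span_mono) blast

lemma T1s_var: assumes "s \<in> T1s n" shows "Mon i' a' c' * s \<in> T1s n"
proof -
  obtain e a c where "s = Mon e a c * Zs (Suc n)" using assms unfolding T1s_def by blast
  then have "Mon i' a' c' * s = Mon (i' + e) (a' + a) (c' + c) * Zs (Suc n)"
    by (simp add: mult.assoc[symmetric] Mon_mult)
  then show ?thesis unfolding T1s_def by blast
qed

lemma Wn_k: "w \<in> Wn n \<Longrightarrow> vk * w \<in> Wn n"
  unfolding Wn_def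
proof (erule span_mult_into)
  fix s assume "s \<in> T1s n \<union> T23 n n"
  then have "vk * s \<in> T1s n \<union> T23 n n" using T1s_var[of s n 0 0 1] T23_k by (auto simp: vk_Mon)
  then show "vk * s \<in> cs.span (T1s n \<union> T23 n n)" by (rule span_in)
qed

lemma Wn_t: assumes n1: "n \<ge> 1" shows "w \<in> Wn n \<Longrightarrow> vt * w \<in> Wn n"
  unfolding Wn_def
proof (erule span_mult_into)
  fix s assume s: "s \<in> T1s n \<union> T23 n n"
  show "vt * s \<in> cs.span (T1s n \<union> T23 n n)"
  proof (cases "s \<in> T1s n")
    case True then show ?thesis using T1s_var[of s n 0 1 0] by (auto simp: vt_Mon intro: span_in)
  next
    case False
    then have "s \<in> T23 n n" using s by blast
    then have "vt * s \<in> cs.span (T23 n n)" by (rule T23_t[OF n1])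
    then show ?thesis using T23_Wn unfolding Wn_def by blast
  qed
qed

lemma Wn_b: assumes n1: "n \<ge> 1" shows "w \<in> Wn n \<Longrightarrow> vb * w \<in> Wn n"
  unfolding Wn_def
proof (erule span_mult_into)
  fix s assume s: "s \<in> T1s n \<union> T23 n n"
  show "vb * s \<in> cs.span (T1s n \<union> T23 n n)"
  proof (cases "s \<in> T1s n")
    case True then show ?thesis using T1s_var[of s n 1 0 0] by (auto simp: vb_Mon intro: span_in)
  next
    case False
    then have "s \<in> T23 n n" using s by blast
    then obtain i p c a where h: "s = Mon i p c * Pp a" "i < n" "a = Suc n \<or> (p = 0 \<and> a \<le> n \<and> Suc n \<le> a + c)"
      by (rule T23E)
    show ?thesis
    proof (cases "Suc i < n")
      case True
      then have "vb * s \<in> T23 n n" using h by (auto simp: vb_Mon mult.assoc[symmetric] Mon_mult intro!: T23I)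
      then show ?thesis by (intro span_in) blast
    next
      case False
      then have iN: "Suc i = n" using h by simp
      define q where "q = Mon 0 p c * Pp a"
      have q1: "q \<in> cs.span (T23 n 1)" unfolding q_def using h by (intro span_in T23I) auto
      have e1: "vb * s = Mon (Suc i) p c * Pp a" unfolding h vb_Mon by (simp add: mult.assoc[symmetric] Mon_mult)
      have e2: "vb ^ n * q = Mon n p c * Pp a" unfolding q_def var_pow_Mon by (simp add: mult.assoc[symmetric] Mon_mult)
      have "vb * s = vb ^ n * q" unfolding e1 e2 iN ..
      also have "vb ^ n = cscale (1/2) (Zs (Suc n) - Rs n)"
        unfolding Zs_Rs by (simp add: cscale_def mult.assoc[symmetric] mult_single flip: single_numeral)
      finally have e: "vb * s = cscale (1/2) (q * Zs (Suc n) - Rs n * q)" by (simp add: algebra_simps)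
      have qp: "q \<in> polys3" unfolding q_def by (intro polys3_mult Mon_polys3 Pp_polys3)
      have "q * Zs (Suc n) \<in> Wn n" using T1s_mult[OF qp] T1s_Wn by blast
      moreover have "Rs n * q \<in> Wn n" using span_T23_Rs[OF n1 q1, of n] T23_Wn by blast
      ultimately have "vb * s \<in> Wn n" unfolding e using Wn_sub cs.subspace_def
        by (metis Wn_def cs.span_diff cs.span_scale cs.span_eq_iff)
      then show ?thesis unfolding Wn_def .
    qed
  qed
qed

lemma ideal_Wn: assumes n1: "n \<ge> 1" shows "Idl n \<subseteq> Wn n"
proof
  fix f assume "f \<in> Idl n"
  then obtain a where a: "f = (\<Sum>i\<in>UNIV. a $ i * Gv n $ i)" "\<forall>i. a $ i \<in> polys3"
    unfolding gen_ideal_def by blast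
  have cl: "p * w \<in> Wn n" if "p \<in> polys3" "w \<in> Wn n" for p w
    using mult_closed[OF Wn_sub Wn_b[OF n1] Wn_t[OF n1] Wn_k that] .
  have "Mon 0 0 0 * Zs (Suc n) \<in> T1s n" unfolding T1s_def by blast
  then have Z: "Zs (Suc n) \<in> Wn n" using T1s_Wn span_in[of "Mon 0 0 0 * Zs (Suc n)" "T1s n"] by (simp del: Zs.simps) blast
  have "Mon 0 0 0 * Pp (Suc n) \<in> T23 n n" by (rule T23I) (use n1 in auto)
  then have P1: "Pp (Suc n) \<in> Wn n" using T23_Wn span_in[of "Pp (Suc n)" "T23 n n"] by auto
  have add: "x + y \<in> Wn n" if "x \<in> Wn n" "y \<in> Wn n" for x y
    using that Wn_sub unfolding cs.subspace_def by blast
  have diff: "x - y \<in> Wn n" if "x \<in> Wn n" "y \<in> Wn n" for x y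
    using that unfolding Wn_def by (rule cs.span_diff)
  have "Mon 0 0 1 * Pp n \<in> T23 n n" by (rule T23I) (use n1 in auto)
  then have kP: "vk * Pp n \<in> Wn n" using T23_Wn span_in[of "vk * Pp n" "T23 n n"] by (auto simp: vk_Mon)
  have P2: "Pp (Suc (Suc n)) \<in> Wn n"
    using add[OF cl[OF vt_polys3 P1] kP] by simp
  have Z2: "Zs (Suc (Suc n)) = vb * Zs (Suc n) + Pp (Suc n)" by (simp add: Zs.simps)
  have G3: "Gv n $ 3 \<in> Wn n" using Z by (simp add: Gv3)
  have G2: "Gv n $ 2 \<in> Wn n" unfolding Gv2 Z2
    by (intro diff add cl P1 Z vb_polys3 vt_polys3)
  have D: "Zs (Suc (Suc (Suc n))) - vt * Zs (Suc (Suc n)) - vk * Zs (Suc n) = Gv n $ 1"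
    using Zs_D[of "Suc n"] by (simp add: Gv1)
  have Z3: "Zs (Suc (Suc (Suc n))) = vb * Zs (Suc (Suc n)) + Pp (Suc (Suc n))" by (simp add: Zs.simps)
  have e: "Gv n $ 1 = Pp (Suc (Suc n)) - (vt - vb) * (Gv n $ 2 + vt * Gv n $ 3) - vk * Gv n $ 3"
    using D unfolding Gv2 Gv3 Z3 by (simp add: algebra_simps)
  have G1: "Gv n $ 1 \<in> Wn n" unfolding e
    by (intro diff add cl P2 G2 G3 vb_polys3 vt_polys3 vk_polys3 polys3_diff)
  have "\<forall>i. a $ i * Gv n $ i \<in> Wn n" unfolding forall_3 using G1 G2 G3 a(2) cl by blast
  then show "f \<in> Wn n" unfolding a(1) sum_3 using add by blast
qed




lemma lookup_cscale: "Poly_Mapping.lookup (cscale c p) m = c * Poly_Mapping.lookup p m"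
  unfolding cscale_def mult_map_scale_conv_mult[symmetric]
  by (simp add: Poly_Mapping.map.rep_eq when_def)

definition tdeg :: "nat \<times> nat \<times> nat \<Rightarrow> nat" where "tdeg x = (case x of (i, a, c) \<Rightarrow> i + a + 2 * c)"

definition hfun :: "nat \<Rightarrow> nat \<times> nat \<times> nat \<Rightarrow> mpoly" where
  "hfun n x = (case x of (i, a, c) \<Rightarrow>
     if n \<le> i then Mon (i - n) a c * Zs (Suc n)
     else if Suc n \<le> a then Mon i (a - Suc n) c * Pp (Suc n)
     else Mon i 0 c * Pp a)"

definition NS :: "nat \<Rightarrow> (nat \<times> nat \<times> nat) set" where
  "NS n = {(i, a, c). \<not> (i < n \<and> a + c \<le> n)}"

definition NSd :: "nat \<Rightarrow> nat \<Rightarrow> (nat \<times> nat \<times> nat) set" where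
  "NSd n d = {x \<in> NS n. tdeg x = d}"

lemma T_hfun: "T1s n \<union> T23 n n \<subseteq> hfun n ` NS n"
proof
  fix s assume "s \<in> T1s n \<union> T23 n n"
  then show "s \<in> hfun n ` NS n"
  proof
    assume "s \<in> T1s n"
    then obtain e a c where s: "s = Mon e a c * Zs (Suc n)" unfolding T1s_def by blast
    have "(e + n, a, c) \<in> NS n" "hfun n (e + n, a, c) = s" unfolding NS_def hfun_def s by auto
    then show ?thesis by (metis image_eqI)
  next
    assume "s \<in> T23 n n"
    then obtain i p c a where h: "s = Mon i p c * Pp a" "i < n" "a = Suc n \<or> (p = 0 \<and> a \<le> n \<and> Suc n \<le> a + c)"
      by (rule T23E)
    show ?thesis
    proof (cases "a = Suc n")
      case True
      have "(i, p + Suc n, c) \<in> NS n" "hfun n (i, p + Suc n, c) = s" unfolding NS_def hfun_def h True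
        using h(2) by auto
      then show ?thesis by (metis image_eqI)
    next
      case False
      then have h2: "p = 0" "a \<le> n" "Suc n \<le> a + c" using h by auto
      have "(i, a, c) \<in> NS n" "hfun n (i, a, c) = s" unfolding NS_def hfun_def h h2
        using h(2) h2 by auto
      then show ?thesis by (metis image_eqI)
    qed
  qed
qed

lemma hfun_homog: "hfun n x \<in> homog (tdeg x)"
proof -
  obtain i a c where x: "x = (i, a, c)" by (cases x) auto
  show ?thesis
  proof (cases "n \<le> i")
    case True
    have "hfun n x = Mon (i - n) a c * Zs (Suc n)" unfolding x hfun_def using True by simp
    moreover have "(i - n + a + 2 * c) + n = tdeg x" unfolding x tdeg_def using True by simp
    ultimately show ?thesis using homog_mult[OF MonsD_homog Zs_homog] by metis
  next
    case False
    show ?thesis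
    proof (cases "Suc n \<le> a")
      case True
      have "hfun n x = Mon i (a - Suc n) c * Pp (Suc n)" unfolding x hfun_def using True False by simp
      moreover have "(i + (a - Suc n) + 2 * c) + Suc n = tdeg x" unfolding x tdeg_def using True by simp
      ultimately show ?thesis using homog_mult[OF MonsD_homog Pp_homog] by metis
    next
      case F2: False
      have "hfun n x = Mon i 0 c * Pp a" unfolding x hfun_def using F2 False by simp
      moreover have "(i + 0 + 2 * c) + a = tdeg x" unfolding x tdeg_def by simp
      ultimately show ?thesis using homog_mult[OF MonsD_homog Pp_homog] by metis
    qed
  qed
qed

definition Zd :: "nat \<Rightarrow> mpoly set" where
  "Zd d = {p. \<forall>m. wdeg m = d \<longrightarrow> Poly_Mapping.lookup p m = 0}"

lemma Zd_sub: "cs.subspace (Zd d)"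
  unfolding Zd_def cs.subspace_def by (simp add: Poly_Mapping.lookup_add lookup_cscale)

lemma homog_Zd: "p \<in> homog e \<Longrightarrow> e \<noteq> d \<Longrightarrow> p \<in> Zd d"
  unfolding Zd_def homog_def by (auto simp: in_keys_iff)

lemma homog_Zd_zero: "p \<in> homog d \<Longrightarrow> p \<in> Zd d \<Longrightarrow> p = 0"
proof -
  assume "p \<in> homog d" "p \<in> Zd d"
  then have "Poly_Mapping.keys p = {}" unfolding Zd_def homog_def
    by (metis (mono_tags, lifting) equals0I in_keys_iff mem_Collect_eq)
  then show "p = 0" by simp
qed

lemma graded_B: assumes n1: "n \<ge> 1" shows "Idl n \<inter> homog d \<subseteq> cs.span (hfun n ` NSd n d)"
proof
  fix f assume f: "f \<in> Idl n \<inter> homog d"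
  have "f \<in> Wn n" using f ideal_Wn[OF n1] by blast
  moreover have "Wn n \<subseteq> cs.span (hfun n ` NS n)" unfolding Wn_def by (rule cs.span_mono[OF T_hfun])
  moreover have "hfun n ` NS n = hfun n ` NSd n d \<union> hfun n ` (NS n - NSd n d)" unfolding NSd_def by blast
  ultimately have "f \<in> cs.span (hfun n ` NSd n d \<union> hfun n ` (NS n - NSd n d))" by auto
  then obtain x y where xy: "f = x + y" "x \<in> cs.span (hfun n ` NSd n d)" "y \<in> cs.span (hfun n ` (NS n - NSd n d))"
    unfolding cs.span_Un by blast
  have "hfun n ` NSd n d \<subseteq> homog d" unfolding NSd_def using hfun_homog by blast
  then have "cs.span (hfun n ` NSd n d) \<subseteq> homog d" using homog_subspace by (intro cs.span_minimal)
  then have xh: "x \<in> homog d" using xy by blast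
  have "hfun n ` (NS n - NSd n d) \<subseteq> Zd d" unfolding NSd_def using hfun_homog homog_Zd by blast
  then have "cs.span (hfun n ` (NS n - NSd n d)) \<subseteq> Zd d" using Zd_sub by (intro cs.span_minimal)
  then have yZ: "y \<in> Zd d" using xy by blast
  have "y = f - x" using xy by simp
  then have "y \<in> homog d" using f xh homog_subspace[of d] by (metis IntD2 cs.span_diff cs.span_eq_iff)
  then have "y = 0" using yZ homog_Zd_zero by blast
  then show "f \<in> cs.span (hfun n ` NSd n d)" using xy by simp
qed




definition Td :: "nat \<Rightarrow> (nat \<times> nat \<times> nat) set" where "Td d = {x. tdeg x = d}"
definition S3 :: "nat \<Rightarrow> (nat \<times> nat \<times> nat) set" where "S3 n = {(i, a, c). i < n \<and> a + c \<le> n}"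
definition Sd :: "nat \<Rightarrow> nat \<Rightarrow> (nat \<times> nat \<times> nat) set" where "Sd n d = {x \<in> S3 n. tdeg x = d}"
definition MonT :: "nat \<times> nat \<times> nat \<Rightarrow> mpoly" where "MonT x = (case x of (i, a, c) \<Rightarrow> Mon i a c)"

lemma MonT_inj: "inj MonT"
  unfolding inj_def MonT_def by (auto simp: Mon_inj)

lemma Td_finite: "finite (Td d)"
proof -
  have "Td d \<subseteq> {..d} \<times> {..d} \<times> {..d}" unfolding Td_def tdeg_def by auto
  then show ?thesis by (rule finite_subset) auto
qed

lemma Sd_Td: "Sd n d \<subseteq> Td d" unfolding Sd_def Td_def by auto
lemma NSd_eq: "NSd n d = Td d - Sd n d" unfolding NSd_def Td_def Sd_def NS_def S3_def by auto

lemma MonT_image: "MonT ` {x. P x} = {Mon i a c | i a c. P (i, a, c)}"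
proof
  show "MonT ` {x. P x} \<subseteq> {Mon i a c | i a c. P (i, a, c)}"
  proof
    fix y assume "y \<in> MonT ` {x. P x}"
    then obtain x where x: "P x" "y = MonT x" by blast
    obtain i a c where "x = (i, a, c)" by (cases x) auto
    then show "y \<in> {Mon i a c | i a c. P (i, a, c)}" using x unfolding MonT_def by auto
  qed
next
  show "{Mon i a c | i a c. P (i, a, c)} \<subseteq> MonT ` {x. P x}"
  proof
    fix y assume "y \<in> {Mon i a c | i a c. P (i, a, c)}"
    then obtain i a c where "y = Mon i a c" "P (i, a, c)" by blast
    then have "y = MonT (i, a, c)" "(i, a, c) \<in> {x. P x}" unfolding MonT_def by auto
    then show "y \<in> MonT ` {x. P x}" by blast
  qed
qed

lemma MonsD_eq: "MonsD d = MonT ` Td d"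
  unfolding MonsD_def Td_def MonT_image tdeg_def by simp

lemma Std_eq: "Std n d = MonT ` Sd n d"
proof -
  have e: "Sd n d = {x. case x of (i, a, c) \<Rightarrow> i + a + 2 * c = d \<and> i < n \<and> a + c \<le> n}"
    unfolding Sd_def S3_def tdeg_def by auto
  show ?thesis unfolding Std_def e MonT_image by simp
qed

lemma range_MonT_E: assumes "y \<in> range MonT" obtains i a c where "y = Mon i a c"
proof -
  obtain x where x: "y = MonT x" using assms by blast
  obtain i a c where "x = (i, a, c)" by (cases x) auto
  then show ?thesis using that x unfolding MonT_def by simp
qed

lemma lookup_Mon_key: "Poly_Mapping.lookup y (mexp i a c) = (if y = Mon i a c then 1 else 0)" if yr: "y \<in> range MonT" for y i a c
proof -
  obtain i' a' c' where y: "y = Mon i' a' c'" by (rule range_MonT_E[OF yr])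
  have e1: "(Mon i' a' c' = Mon i a c) = (mexp i' a' c' = mexp i a c)" by (simp only: Mon_inj mexp_inj)
  have e2: "Poly_Mapping.lookup (Mon i' a' c') (mexp i a c) = (1 when mexp i' a' c' = mexp i a c)"
    unfolding Mon_def by (rule lookup_single)
  show ?thesis unfolding y e2 e1 when_def by (rule refl)
qed

lemma indep_Mons: assumes "finite A" "A \<subseteq> range MonT" shows "cs.independent A"
proof (rule cs.independent_if_scalars_zero[OF assms(1)])
  fix f x assume s: "(\<Sum>x\<in>A. cscale (f x) x) = 0" and x: "x \<in> A"
  have "x \<in> range MonT" using x assms(2) by blast
  then obtain i a c where xe: "x = Mon i a c" by (rule range_MonT_E)
  have "0 = Poly_Mapping.lookup (\<Sum>y\<in>A. cscale (f y) y) (mexp i a c)" using s by simp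
  also have "\<dots> = (\<Sum>y\<in>A. f y * (if y = x then 1 else 0))"
    unfolding lookup_sum lookup_cscale xe
  proof (rule sum.cong[OF refl])
    fix y assume "y \<in> A"
    then have "y \<in> range MonT" using assms(2) by blast
    then show "f y * Poly_Mapping.lookup y (mexp i a c) = f y * (if y = Mon i a c then 1 else 0)"
      by (simp only: lookup_Mon_key)
  qed
  also have "\<dots> = f x" using x assms(1) by (simp add: if_distrib sum.delta cong: if_cong)
  finally show "f x = 0" by simp
qed

lemma dim_homog: "cs.dim (homog d) = card (Td d)"
proof -
  have "cs.independent (MonsD d)" unfolding MonsD_eq using Td_finite by (intro indep_Mons) auto
  then have "cs.dim (cs.span (MonsD d)) = card (MonsD d)" by (rule cs.dim_span_eq_card_independent)
  moreover have "card (MonsD d) = card (Td d)" unfolding MonsD_eq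
    by (rule card_image[OF inj_on_subset[OF MonT_inj subset_UNIV]])
  ultimately show ?thesis using homog_eq_span by simp
qed

lemma dim_ideal_le: assumes n1: "n \<ge> 1" shows "cs.dim (Idl n \<inter> homog d) \<le> card (NSd n d)"
proof -
  have fin: "finite (NSd n d)" unfolding NSd_eq using Td_finite by simp
  have "cs.dim (Idl n \<inter> homog d) \<le> card (hfun n ` NSd n d)"
    using graded_B[OF n1] fin by (intro cs.dim_le_card) auto
  also have "\<dots> \<le> card (NSd n d)" using fin by (rule card_image_le)
  finally show ?thesis .
qed

lemma dim_union_le: assumes "A \<subseteq> homog d" "finite B" "V \<subseteq> cs.span (A \<union> B)" shows "cs.dim V \<le> cs.dim A + card B"
proof -
  obtain BA where BA: "BA \<subseteq> A" "cs.independent BA" "A \<subseteq> cs.span BA" "card BA = cs.dim A"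
    by (rule cs.basis_exists)
  have "BA \<subseteq> cs.span (MonsD d)" using BA(1) assms(1) homog_eq_span by blast
  moreover have "finite (MonsD d)" unfolding MonsD_eq using Td_finite by simp
  ultimately have fBA: "finite BA" using cs.independent_span_bound BA(2) by blast
  have "A \<union> B \<subseteq> cs.span (BA \<union> B)"
    using BA(3) cs.span_mono[of BA "BA \<union> B"] cs.span_superset[of "BA \<union> B"] by blast
  then have "cs.span (A \<union> B) \<subseteq> cs.span (BA \<union> B)" by (simp add: cs.span_minimal)
  then have "V \<subseteq> cs.span (BA \<union> B)" using assms(3) by blast
  then have "cs.dim V \<le> card (BA \<union> B)" using fBA assms(2) by (intro cs.dim_le_card) auto
  also have "\<dots> \<le> card BA + card B" by (rule card_Un_le)
  finally show ?thesis using BA(4) by simp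
qed

lemma dim_ideal_ge: assumes n1: "n \<ge> 1" shows "card (Td d) \<le> cs.dim (Idl n \<inter> homog d) + card (Sd n d)"
proof -
  have "homog d \<subseteq> cs.span ((Idl n \<inter> homog d) \<union> Std n d)"
  proof
    fix p assume "p \<in> homog d"
    then have "p \<in> cs.span (MonsD d)" using homog_eq_span by blast
    moreover have "MonsD d \<subseteq> cs.span ((Idl n \<inter> homog d) \<union> Std n d)"
    proof
      fix x assume "x \<in> MonsD d"
      then obtain i a c where "x = Mon i a c" "i + a + 2 * c = d" unfolding MonsD_def by blast
      then show "x \<in> cs.span ((Idl n \<inter> homog d) \<union> Std n d)" using red_A[OF n1] by blast
    qed
    ultimately show "p \<in> cs.span ((Idl n \<inter> homog d) \<union> Std n d)"
      using cs.span_minimal[of "MonsD d"] by blast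
  qed
  note sp = this
  have fS: "finite (Sd n d)" using Td_finite Sd_Td by (meson finite_subset)
  have fS': "finite (Std n d)" unfolding Std_eq using fS by (rule finite_imageI)
  have I1: "Idl n \<inter> homog d \<subseteq> homog d" by (rule Int_lower2)
  have "cs.dim (homog d) \<le> cs.dim (Idl n \<inter> homog d) + card (Std n d)"
    by (rule dim_union_le[OF I1 fS' sp])
  moreover have "card (Std n d) \<le> card (Sd n d)" unfolding Std_eq using fS by (rule card_image_le)
  ultimately show ?thesis unfolding dim_homog by linarith
qed

lemma hilbert_card: assumes n1: "n \<ge> 1" shows "hilbert_fun (Idl n) d = card (Sd n d)"
proof -
  have c: "card (NSd n d) = card (Td d) - card (Sd n d)"
    unfolding NSd_eq using Td_finite Sd_Td by (meson card_Diff_subset finite_subset)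
  have le: "card (Sd n d) \<le> card (Td d)" using Td_finite Sd_Td by (simp add: card_mono)
  have "cs.dim (Idl n \<inter> homog d) = card (Td d) - card (Sd n d)"
    using dim_ideal_le[OF n1, of d] dim_ideal_ge[OF n1, of d] c by linarith
  then show ?thesis unfolding hilbert_fun_def dim_homog using le by simp
qed




definition S2 :: "nat \<Rightarrow> (nat \<times> nat) set" where "S2 n = {(a, c). a + c \<le> n}"

lemma S2_finite: "finite (S2 n)"
proof -
  have "S2 n \<subseteq> {..n} \<times> {..n}" unfolding S2_def by auto
  then show ?thesis by (rule finite_subset) auto
qed

lemma S3_eq: "S3 n = {..<n} \<times> S2 n" unfolding S3_def S2_def by auto

lemma S3_finite: "finite (S3 n)" unfolding S3_eq using S2_finite by simp

lemma S2_Suc: "S2 (Suc n) = S2 n \<union> (\<lambda>c. (Suc n - c, c)) ` {..Suc n}"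
proof
  show "S2 (Suc n) \<subseteq> S2 n \<union> (\<lambda>c. (Suc n - c, c)) ` {..Suc n}"
  proof
    fix y assume "y \<in> S2 (Suc n)"
    then obtain a c where y: "y = (a, c)" "a + c \<le> Suc n" unfolding S2_def by blast
    show "y \<in> S2 n \<union> (\<lambda>c. (Suc n - c, c)) ` {..Suc n}"
    proof (cases "a + c \<le> n")
      case True then show ?thesis unfolding S2_def y by blast
    next
      case False
      then have "y = (Suc n - c, c)" "c \<in> {..Suc n}" using y by auto
      then show ?thesis by blast
    qed
  qed
next
  show "S2 n \<union> (\<lambda>c. (Suc n - c, c)) ` {..Suc n} \<subseteq> S2 (Suc n)" unfolding S2_def by auto
qed

lemma g2_identity:
  fixes x :: "'a::comm_ring_1"
  shows "(1 - x) * (1 - x^2) * (\<Sum>y\<in>S2 n. x ^ (fst y + 2 * snd y)) = (1 - x ^ Suc n) * (1 - x ^ Suc (Suc n))"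
proof (induction n)
  case 0
  have "S2 0 = {(0, 0)}" unfolding S2_def by auto
  then show ?case by (simp add: algebra_simps power2_eq_square)
next
  case (Suc n)
  let ?E = "(\<lambda>c. (Suc n - c, c)) ` {..Suc n}"
  have disj: "S2 n \<inter> ?E = {}" unfolding S2_def by auto
  have inj: "inj_on (\<lambda>c. (Suc n - c, c)) {..Suc n}" unfolding inj_on_def by auto
  have fE: "finite ?E" by simp
  have sE: "(\<Sum>y\<in>?E. x ^ (fst y + 2 * snd y)) = (\<Sum>c\<le>Suc n. x ^ (Suc n + c))"
    by (subst sum.reindex[OF inj]) (auto intro!: sum.cong simp: algebra_simps)
  also have "\<dots> = x ^ Suc n * (\<Sum>c<Suc (Suc n). x ^ c)"
    by (simp only: lessThan_Suc_atMost power_add sum_distrib_left)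
  finally have sE': "(\<Sum>y\<in>?E. x ^ (fst y + 2 * snd y)) = x ^ Suc n * (\<Sum>c<Suc (Suc n). x ^ c)" .
  have gs: "(1 - x) * (\<Sum>c<Suc (Suc n). x ^ c) = 1 - x ^ Suc (Suc n)"
    using one_diff_power_eq[of x "Suc (Suc n)"] by simp
  have "(\<Sum>y\<in>S2 (Suc n). x ^ (fst y + 2 * snd y))
      = (\<Sum>y\<in>S2 n. x ^ (fst y + 2 * snd y)) + (\<Sum>y\<in>?E. x ^ (fst y + 2 * snd y))"
    unfolding S2_Suc using S2_finite fE disj by (rule sum.union_disjoint)
  then have "(1 - x) * (1 - x^2) * (\<Sum>y\<in>S2 (Suc n). x ^ (fst y + 2 * snd y))
     = (1 - x) * (1 - x^2) * (\<Sum>y\<in>S2 n. x ^ (fst y + 2 * snd y))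
       + (1 - x^2) * x ^ Suc n * ((1 - x) * (\<Sum>c<Suc (Suc n). x ^ c))"
    unfolding sE' by (simp add: algebra_simps)
  also have "\<dots> = (1 - x ^ Suc n) * (1 - x ^ Suc (Suc n)) + (1 - x^2) * x ^ Suc n * (1 - x ^ Suc (Suc n))"
    unfolding Suc.IH gs ..
  also have "\<dots> = (1 - x ^ Suc (Suc n)) * (1 - x ^ Suc (Suc (Suc n)))"
    by (simp add: algebra_simps power2_eq_square)
  finally show ?case .
qed

lemma H_sum: "Abs_fps (\<lambda>d. of_nat (card (Sd n d))) = (\<Sum>x\<in>S3 n. (fps_X :: complex fps) ^ tdeg x)"
proof (rule fps_ext)
  fix d
  have "fps_nth (\<Sum>x\<in>S3 n. (fps_X :: complex fps) ^ tdeg x) d = (\<Sum>x\<in>S3 n. of_bool (tdeg x = d))"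
    unfolding fps_sum_nth by (intro sum.cong) auto
  also have "\<dots> = of_nat (card (S3 n \<inter> {x. tdeg x = d}))" using S3_finite by simp
  also have "S3 n \<inter> {x. tdeg x = d} = Sd n d" unfolding Sd_def by auto
  finally show "fps_nth (Abs_fps (\<lambda>d. of_nat (card (Sd n d)))) d = fps_nth (\<Sum>x\<in>S3 n. (fps_X :: complex fps) ^ tdeg x) d"
    by simp
qed

lemma H_prod: "(\<Sum>x\<in>S3 n. (fps_X :: complex fps) ^ tdeg x)
   = (\<Sum>i<n. fps_X ^ i) * (\<Sum>y\<in>S2 n. fps_X ^ (fst y + 2 * snd y))"
proof -
  have "(\<Sum>x\<in>S3 n. (fps_X :: complex fps) ^ tdeg x) = (\<Sum>i<n. \<Sum>y\<in>S2 n. fps_X ^ tdeg (i, y))"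
    unfolding S3_eq by (simp add: sum.cartesian_product)
  also have "\<dots> = (\<Sum>i<n. \<Sum>y\<in>S2 n. fps_X ^ i * fps_X ^ (fst y + 2 * snd y))"
  proof (intro sum.cong refl)
    fix i y assume "y \<in> S2 n"
    obtain a c where y: "y = (a, c)" by (cases y) auto
    have "tdeg (i, y) = i + (fst y + 2 * snd y)" unfolding y tdeg_def by simp
    then show "(fps_X :: complex fps) ^ tdeg (i, y) = fps_X ^ i * fps_X ^ (fst y + 2 * snd y)"
      by (simp only: power_add)
  qed
  also have "\<dots> = (\<Sum>i<n. fps_X ^ i) * (\<Sum>y\<in>S2 n. fps_X ^ (fst y + 2 * snd y))"
    by (rule sum_product[symmetric])
  finally show ?thesis .
qed

lemma final_fps:
  assumes n1: "n \<ge> 1"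
  shows "hilbert_series (gen_ideal (G (n + 1))) =
    ((1 - fps_X ^ n) * (1 - fps_X ^ (n + 1)) * (1 - fps_X ^ (n + 2)))
      / ((fps_X - 1) ^ 2 * (1 - fps_X ^ 2))"
proof -
  define H :: "complex fps" where "H = Abs_fps (\<lambda>d. of_nat (card (Sd n d)))"
  have hs: "hilbert_series (gen_ideal (G (n + 1))) = H"
    unfolding hilbert_series_def G_Gv H_def using hilbert_card[OF n1] by simp
  define A :: "complex fps" where "A = (\<Sum>i<n. fps_X ^ i)"
  define B :: "complex fps" where "B = (\<Sum>y\<in>S2 n. fps_X ^ (fst y + 2 * snd y))"
  have HAB: "H = A * B" unfolding H_def A_def B_def H_sum H_prod ..
  have Aeq: "(1 - fps_X) * A = 1 - fps_X ^ n" unfolding A_def using one_diff_power_eq[of "fps_X :: complex fps" n] by simp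
  have Beq: "(1 - fps_X) * (1 - fps_X ^ 2) * B = (1 - fps_X ^ (n + 1)) * (1 - fps_X ^ (n + 2))"
    unfolding B_def using g2_identity[of "fps_X :: complex fps" n] by simp
  define D :: "complex fps" where "D = (fps_X - 1) ^ 2 * (1 - fps_X ^ 2)"
  have "H * D = ((1 - fps_X) * A) * ((1 - fps_X) * (1 - fps_X ^ 2) * B)"
    unfolding HAB D_def by (simp add: algebra_simps power2_eq_square)
  also have "\<dots> = (1 - fps_X ^ n) * (1 - fps_X ^ (n + 1)) * (1 - fps_X ^ (n + 2))"
    unfolding Aeq Beq by (simp add: mult.assoc)
  finally have HD: "H * D = (1 - fps_X ^ n) * (1 - fps_X ^ (n + 1)) * (1 - fps_X ^ (n + 2))" .
  have "fps_nth D 0 = 1" unfolding D_def by (simp add: power2_eq_square)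
  then have D0: "D \<noteq> 0" by auto
  have "((1 - fps_X ^ n) * (1 - fps_X ^ (n + 1)) * (1 - fps_X ^ (n + 2))) / D = H"
    unfolding HD[symmetric] using D0 by (rule nonzero_mult_div_cancel_right)
  then show ?thesis unfolding hs D_def by simp
qed


theorem lemma4p28:
  fixes n :: nat
  assumes "n \<ge> 1"
  shows "hilbert_series (gen_ideal (G (n + 1))) =
    ((1 - fps_X ^ n) * (1 - fps_X ^ (n + 1)) * (1 - fps_X ^ (n + 2)))
      / ((fps_X - 1) ^ 2 * (1 - fps_X ^ 2))"
  using final_fps[OF assms] .

end
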